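(* Let $r\geq 2$, let $\mathcal{G}$ and $\mathcal{H}$ be $r$-uniform hypergraphs with $u\in V(\mathcal{G})$ and $v\in V(\mathcal{H})$, and let $m$ be a positive integer. Then $\varphi\big((\mathcal{G}_u\cdot m\mathcal{H}_v)\cup(m-1)\mathcal{G},x\big)=\varphi\big((\mathcal{H}_v\cdot m\mathcal{G}_u)\cup(m-1)\mathcal{H},x\big)$.
   Context: For an $r$-uniform hypergraph $\mathcal{K}$ on $n$ vertices, $m(\mathcal{K},k)$ is the number of sets of $k$ pairwise disjoint edges ($m(\mathcal{K},0)=1$) and $\varphi(\mathcal{K},x)=\sum_{k\geq0}(-1)^km(\mathcal{K},k)x^{n-kr}$ is the matching polynomial. $\cup$ denotes disjoint union and $k\mathcal{G}$ the disjoint union of $k$ copies of $\mathcal{G}$ ($0\mathcal{G}$ is empty). $\mathcal{G}_u\cdot m\mathcal{H}_v$ is the hypergraph obtained from $\mathcal{G}$ and $m$ disjoint copies of $\mathcal{H}$ by adding $m$ new edges $e_1,\dots,e_m$, where $e_i=\{v_{i,1},\dots,v_{i,r}\}$, $v_{i,1}$ is identified with $u$, $v_{i,r}$ is identified with the vertex $v$ of the $i$-th copy of $\mathcal{H}$, and $v_{i,2},\dots,v_{i,r-1}$ are new vertices (all distinct). $\mathcal{H}_v\cdot m\mathcal{G}_u$ is defined analogously with the roles of $(\mathcal{G},u)$ and $(\mathcal{H},v)$ exchanged. *)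

theory Defs
  imports "HOL-Computational_Algebra.Polynomial"
begin

type_synonym 'a hg = "'a set \<times> 'a set set"

definition verts :: "'a hg \<Rightarrow> 'a set" where "verts K = fst K"
definition edges :: "'a hg \<Rightarrow> 'a set set" where "edges K = snd K"

definition uniform_hg :: "nat \<Rightarrow> 'a hg \<Rightarrow> bool" where
  "uniform_hg r K \<longleftrightarrow> finite (verts K) \<and> (\<forall>e\<in>edges K. e \<subseteq> verts K \<and> card e = r)"

definition num_matchings :: "'a hg \<Rightarrow> nat \<Rightarrow> nat" where
  "num_matchings K k = card {M. M \<subseteq> edges K \<and> card M = k \<and> pairwise disjnt M}"

text \<open>Matching polynomial of an r-uniform hypergraph (terms with k > |E| vanish).\<close>
definition match_poly :: "nat \<Rightarrow> 'a hg \<Rightarrow> int poly" where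
  "match_poly r K = (\<Sum>k\<in>{0..card (edges K)}.
      monom ((-1) ^ k * int (num_matchings K k)) (card (verts K) - k * r))"

definition hg_union :: "'a hg \<Rightarrow> 'b hg \<Rightarrow> ('a + 'b) hg" where
  "hg_union K L = (Inl ` verts K \<union> Inr ` verts L,
                   (\<lambda>e. Inl ` e) ` edges K \<union> (\<lambda>e. Inr ` e) ` edges L)"

definition hg_copies :: "nat \<Rightarrow> 'a hg \<Rightarrow> (nat \<times> 'a) hg" where
  "hg_copies k K = ({0..<k} \<times> verts K,
                    {(\<lambda>x. (i, x)) ` e | i e. i < k \<and> e \<in> edges K})"

text \<open>G_u . m H_v: vertices Inl (Inl x) for x in G, Inl (Inr (i,y)) for y in the
  i-th copy of H (i < m), and Inr (i,j) for the new vertices v_{i,2..r-1} of edge e_i.\<close>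
definition attach :: "nat \<Rightarrow> 'a hg \<Rightarrow> 'a \<Rightarrow> nat \<Rightarrow> 'b hg \<Rightarrow> 'b \<Rightarrow> (('a + (nat \<times> 'b)) + (nat \<times> nat)) hg" where
  "attach r G u m H v =
    (Inl ` Inl ` verts G \<union> Inl ` Inr ` ({0..<m} \<times> verts H) \<union> Inr ` ({0..<m} \<times> {2..r-1}),
     (\<lambda>e. Inl ` Inl ` e) ` edges G
     \<union> {Inl ` Inr ` (\<lambda>y. (i, y)) ` e | i e. i < m \<and> e \<in> edges H}
     \<union> {{Inl (Inl u), Inl (Inr (i, v))} \<union> Inr ` ({i} \<times> {2..r-1}) | i. i < m})"

end

theory Submission
  imports Defs
begin

definition matchings :: "'a set set \<Rightarrow> 'a set set set" where
 "matchings E = {M. M \<subseteq> E \<and> pairwise disjnt M}"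
definition gen :: "'a set set \<Rightarrow> nat poly" where
 "gen E = (\<Sum>M\<in>matchings E. monom 1 (card M))"

lemma finite_matchings: "finite E \<Longrightarrow> finite (matchings E)"
  unfolding matchings_def by (rule finite_subset[of _ "Pow E"]) auto

lemma coeff_gen: assumes f: "finite E"
  shows "coeff (gen E) k = card {M. M \<subseteq> E \<and> card M = k \<and> pairwise disjnt M}"
proof -
  have "coeff (gen E) k = (\<Sum>M\<in>matchings E. coeff (monom (1::nat) (card M)) k)"
    unfolding gen_def by (rule coeff_sum)
  also have "\<dots> = (\<Sum>M\<in>matchings E. if card M = k then 1 else 0)"
    by (rule sum.cong) (simp_all add: coeff_monom)
  also have "\<dots> = (\<Sum>M\<in>{M\<in>matchings E. card M = k}. 1)"
    by (rule sum.inter_filter[OF finite_matchings[OF f], symmetric])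
  also have "\<dots> = card {M\<in>matchings E. card M = k}"
    by (rule card_eq_sum[symmetric])
  also have "{M\<in>matchings E. card M = k} = {M. M \<subseteq> E \<and> card M = k \<and> pairwise disjnt M}"
    unfolding matchings_def by blast
  finally show ?thesis .
qed

lemma gen_image: assumes "inj g" shows "gen ((\<lambda>e. g ` e) ` E) = gen E"
proof -
  let ?h = "\<lambda>e. g ` e"
  have ih: "inj ?h" using assms by (simp add: inj_image_eq_iff inj_def)
  have dj: "disjnt (g`a) (g`b) \<longleftrightarrow> disjnt a b" for a b using assms
    by (simp add: disjnt_def image_Int[symmetric])
  have "matchings (?h ` E) = (\<lambda>M. ?h ` M) ` matchings E"
  proof
    show "(\<lambda>M. ?h ` M) ` matchings E \<subseteq> matchings (?h ` E)"
    proof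
      fix N assume "N \<in> (\<lambda>M. ?h ` M) ` matchings E"
      then obtain M where M0: "M \<in> matchings E" and M3: "N = ?h ` M" by blast
      then have M: "M \<subseteq> E" "pairwise disjnt M" "N = ?h ` M" unfolding matchings_def by auto
      have "pairwise disjnt N" unfolding pairwise_def
      proof (intro ballI impI)
        fix x y assume xy: "x \<in> N" "y \<in> N" "x \<noteq> y"
        then obtain a b where ab: "a \<in> M" "b \<in> M" "x = g ` a" "y = g ` b" using M(3) by auto
        then have "a \<noteq> b" using xy(3) by auto
        then have "disjnt a b" using M(2) ab(1,2) by (auto simp: pairwise_def)
        then show "disjnt x y" using ab(3,4) dj by simp
      qed
      then show "N \<in> matchings (?h ` E)" using M by (auto simp: matchings_def)
    qed
    show "matchings (?h ` E) \<subseteq> (\<lambda>M. ?h ` M) ` matchings E"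
    proof
      fix N assume "N \<in> matchings (?h ` E)"
      then have N: "N \<subseteq> ?h ` E" "pairwise disjnt N" by (auto simp: matchings_def)
      then obtain M where M: "M \<subseteq> E" "N = ?h ` M" by (auto simp: subset_image_iff)
      have "pairwise disjnt M" using N(2) M(2) ih unfolding pairwise_def
        by (metis dj image_eqI inj_eq)
      then show "N \<in> (\<lambda>M. ?h ` M) ` matchings E" using M by (auto simp: matchings_def)
    qed
  qed
  moreover have "inj_on (\<lambda>M. ?h ` M) (matchings E)" using ih
    by (simp add: inj_on_def inj_image_eq_iff)
  moreover have "card (?h ` M) = card M" for M using ih
    by (simp add: card_image inj_on_subset)
  ultimately show ?thesis unfolding gen_def by (simp add: sum.reindex)
qed

lemma gen_union:
  assumes f1: "finite E1" and f2: "finite E2" and dj: "\<forall>a\<in>E1. \<forall>b\<in>E2. disjnt a b"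
    and ne: "{} \<notin> E1"
  shows "gen (E1 \<union> E2) = gen E1 * gen E2"
proof -
  have E12: "E1 \<inter> E2 = {}"
  proof (rule ccontr)
    assume "E1 \<inter> E2 \<noteq> {}"
    then obtain x where "x \<in> E1" "x \<in> E2" by blast
    then have "disjnt x x" "x \<noteq> {}" using dj ne by blast+
    then show False by (simp add: disjnt_def)
  qed
  let ?f = "\<lambda>(A,B). A \<union> B"
  have eq: "matchings (E1 \<union> E2) = ?f ` (matchings E1 \<times> matchings E2)"
  proof
    show "?f ` (matchings E1 \<times> matchings E2) \<subseteq> matchings (E1 \<union> E2)"
    proof
      fix M assume "M \<in> ?f ` (matchings E1 \<times> matchings E2)"
      then obtain A B where AB: "A \<in> matchings E1" "B \<in> matchings E2" "M = A \<union> B" by blast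
      have A: "A \<subseteq> E1" "pairwise disjnt A" and B: "B \<subseteq> E2" "pairwise disjnt B"
        using AB(1,2) unfolding matchings_def by auto
      have "pairwise disjnt (A \<union> B)" unfolding pairwise_def
      proof (intro ballI impI)
        fix x y assume x: "x \<in> A \<union> B" and y: "y \<in> A \<union> B" and xy: "x \<noteq> y"
        show "disjnt x y"
        proof (cases "x \<in> A")
          case True
          show ?thesis
          proof (cases "y \<in> A")
            case True
            then show ?thesis using \<open>x \<in> A\<close> xy A(2) unfolding pairwise_def by blast
          next
            case False
            then have "y \<in> B" using y by blast
            then show ?thesis using \<open>x \<in> A\<close> A(1) B(1) dj by blast
          qed
        next
          case False
          then have xB: "x \<in> B" using x by blast
          show ?thesis
          proof (cases "y \<in> A")
            case True
            then have "disjnt y x" using xB A(1) B(1) dj by blast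
            then show ?thesis by (rule disjnt_sym)
          next
            case False
            then have "y \<in> B" using y by blast
            then show ?thesis using xB xy B(2) unfolding pairwise_def by blast
          qed
        qed
      qed
      then show "M \<in> matchings (E1 \<union> E2)" using A(1) B(1) AB(3) unfolding matchings_def by blast
    qed
    show "matchings (E1 \<union> E2) \<subseteq> ?f ` (matchings E1 \<times> matchings E2)"
    proof
      fix M assume M: "M \<in> matchings (E1 \<union> E2)"
      then have M1: "M \<subseteq> E1 \<union> E2" "pairwise disjnt M" unfolding matchings_def by auto
      have "M \<inter> E1 \<in> matchings E1" "M \<inter> E2 \<in> matchings E2"
        using M1 pairwise_subset[of disjnt M] unfolding matchings_def by auto
      moreover have "M = ?f (M \<inter> E1, M \<inter> E2)" using M1(1) by auto
      ultimately show "M \<in> ?f ` (matchings E1 \<times> matchings E2)" by blast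
    qed
  qed
  have inj: "inj_on ?f (matchings E1 \<times> matchings E2)"
  proof (rule inj_onI)
    fix p q assume p: "p \<in> matchings E1 \<times> matchings E2" and q: "q \<in> matchings E1 \<times> matchings E2"
      and pq: "?f p = ?f q"
    obtain A B A' B' where pp: "p = (A,B)" and qq: "q = (A',B')" by (cases p, cases q) auto
    have s: "A \<subseteq> E1" "B \<subseteq> E2" "A' \<subseteq> E1" "B' \<subseteq> E2"
      using p q unfolding pp qq matchings_def by auto
    have u: "A \<union> B = A' \<union> B'" using pq unfolding pp qq by simp
    have "A = (A \<union> B) \<inter> E1" "A' = (A' \<union> B') \<inter> E1" "B = (A \<union> B) \<inter> E2" "B' = (A' \<union> B') \<inter> E2"
      using s E12 by blast+
    then show "p = q" unfolding pp qq using u by metis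
  qed
  have cd: "card (?f p) = card (fst p) + card (snd p)" if "p \<in> matchings E1 \<times> matchings E2" for p
  proof -
    obtain A B where pp: "p = (A,B)" by (cases p) auto
    have s: "A \<subseteq> E1" "B \<subseteq> E2" using that unfolding pp matchings_def by auto
    then have "finite A" "finite B" "A \<inter> B = {}" using f1 f2 E12 finite_subset by blast+
    then show ?thesis unfolding pp by (simp add: card_Un_disjoint)
  qed
  have "gen (E1 \<union> E2) = (\<Sum>p\<in>matchings E1 \<times> matchings E2. monom 1 (card (?f p)))"
    unfolding gen_def eq using inj by (simp add: sum.reindex)
  also have "\<dots> = (\<Sum>p\<in>matchings E1 \<times> matchings E2. monom 1 (card (fst p)) * monom 1 (card (snd p)))"
    by (rule sum.cong) (simp_all add: cd mult_monom)
  also have "\<dots> = gen E1 * gen E2"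
    unfolding gen_def sum_product sum.cartesian_product by (simp add: case_prod_beta)
  finally show ?thesis .
qed

lemma gen_delete:
  assumes f: "finite E" and e: "e \<in> E" "e \<noteq> {}"
  shows "gen E = gen (E - {e}) + monom 1 1 * gen {f\<in>E. f \<noteq> e \<and> disjnt f e}"
proof -
  let ?D = "{f\<in>E. f \<noteq> e \<and> disjnt f e}"
  have eq: "matchings E = matchings (E - {e}) \<union> insert e ` matchings ?D"
  proof
    show "matchings (E - {e}) \<union> insert e ` matchings ?D \<subseteq> matchings E"
    proof
      fix M assume "M \<in> matchings (E - {e}) \<union> insert e ` matchings ?D"
      then show "M \<in> matchings E"
      proof
        assume "M \<in> matchings (E - {e})" then show ?thesis by (auto simp: matchings_def)
      next
        assume "M \<in> insert e ` matchings ?D"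
        then obtain N where N: "N \<subseteq> ?D" "pairwise disjnt N" "M = insert e N"
          by (auto simp: matchings_def)
        have "\<forall>y\<in>N. disjnt e y" using N(1) by (auto simp: disjnt_sym)
        then show ?thesis using N e by (auto simp: matchings_def pairwise_insert)
      qed
    qed
    show "matchings E \<subseteq> matchings (E - {e}) \<union> insert e ` matchings ?D"
    proof
      fix M assume M: "M \<in> matchings E"
      show "M \<in> matchings (E - {e}) \<union> insert e ` matchings ?D"
      proof (cases "e \<in> M")
        case True
        then have "M - {e} \<in> matchings ?D" using M
          by (auto simp: matchings_def pairwise_def)
        moreover have "M = insert e (M - {e})" using True by auto
        ultimately show ?thesis by blast
      next
        case False then show ?thesis using M by (auto simp: matchings_def)
      qed
    qed
  qed
  have dis: "matchings (E - {e}) \<inter> insert e ` matchings ?D = {}"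
    by (auto simp: matchings_def)
  have inj: "inj_on (insert e) (matchings ?D)"
    by (auto simp: inj_on_def matchings_def)
  have fin1: "finite (matchings (E - {e}))" "finite (matchings ?D)" using f
    by (auto intro: finite_matchings)
  have cd: "card (insert e M) = Suc (card M)" if "M \<in> matchings ?D" for M
  proof -
    have "M \<subseteq> E" "e \<notin> M" using that by (auto simp: matchings_def)
    then show ?thesis using f by (simp add: finite_subset)
  qed
  have "gen E = gen (E - {e}) + (\<Sum>M\<in>insert e ` matchings ?D. monom 1 (card M))"
    unfolding gen_def eq using fin1 dis by (simp add: sum.union_disjoint)
  also have "(\<Sum>M\<in>insert e ` matchings ?D. monom 1 (card M)) = (\<Sum>M\<in>matchings ?D. monom 1 1 * monom (1::nat) (card M))"
    using inj by (auto simp: sum.reindex cd mult_monom intro!: sum.cong)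
  also have "\<dots> = monom 1 1 * gen ?D" by (simp add: gen_def sum_distrib_left)
  finally show ?thesis .
qed


lemma gen_empty: "gen {} = 1"
proof -
  have e: "matchings {} = {{}}" by (auto simp: matchings_def)
  show ?thesis by (simp add: gen_def e one_pCons monom_0)
qed

lemma gen_copies:
  assumes f: "finite (edges K)" and n: "{} \<notin> edges K"
  shows "gen (edges (hg_copies k K)) = gen (edges K) ^ k \<and> finite (edges (hg_copies k K))
         \<and> {} \<notin> edges (hg_copies k K)"
proof (induction k)
  case 0
  have "edges (hg_copies 0 K) = {}" by (simp add: hg_copies_def edges_def)
  then show ?case by (simp add: gen_empty)
next
  case (Suc k)
  have eq: "edges (hg_copies (Suc k) K) = edges (hg_copies k K) \<union> (\<lambda>e. (\<lambda>x. (k, x)) ` e) ` edges K"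
    by (auto simp: hg_copies_def edges_def less_Suc_eq)
  have dj: "\<forall>a\<in>edges (hg_copies k K). \<forall>b\<in>(\<lambda>e. (\<lambda>x. (k, x)) ` e) ` edges K. disjnt a b"
    by (auto simp: hg_copies_def edges_def disjnt_def)
  have inj: "inj (\<lambda>x::'a. (k, x))" by (auto simp: inj_def)
  have "gen (edges (hg_copies (Suc k) K)) = gen (edges K) ^ Suc k"
    unfolding eq using Suc f dj by (simp add: gen_union gen_image[OF inj] mult.commute)
  moreover have "finite (edges (hg_copies (Suc k) K))" unfolding eq using Suc f by simp
  moreover have "{} \<notin> edges (hg_copies (Suc k) K)" unfolding eq using Suc n by auto
  ultimately show ?case by blast
qed

lemma gen_hg_union:
  fixes K :: "'a set \<times> 'a set set" and L :: "'b set \<times> 'b set set"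
  assumes "finite (edges K)" "finite (edges L)" "{} \<notin> edges K"
  shows "gen (edges (hg_union K L)) = gen (edges K) * gen (edges L)"
proof -
  have inj: "inj Inl" "inj Inr" by (auto simp: inj_def)
  have "edges (hg_union K L) = (\<lambda>e. Inl ` e) ` edges K \<union> (\<lambda>e. Inr ` e) ` edges L"
    by (simp add: hg_union_def edges_def)
  moreover have "\<forall>a\<in>(\<lambda>e. Inl ` e) ` edges K. \<forall>b\<in>(\<lambda>e. Inr ` e) ` edges L. disjnt a b"
    by (auto simp: disjnt_def)
  moreover have "gen ((\<lambda>e. Inl ` e) ` edges K \<union> (\<lambda>e. Inr ` e) ` edges L) = gen ((\<lambda>e. Inl ` e :: ('a + 'b) set) ` edges K) * gen ((\<lambda>e. Inr ` e :: ('a + 'b) set) ` edges L)"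
    by (rule gen_union) (use assms in \<open>auto simp: disjnt_def\<close>)
  ultimately have "gen (edges (hg_union K L)) = gen ((\<lambda>e. Inl ` e :: ('a + 'b) set) ` edges K) * gen ((\<lambda>e. Inr ` e :: ('a + 'b) set) ` edges L)"
    by simp
  then show ?thesis by (simp add: gen_image[OF inj(1)] gen_image[OF inj(2)])
qed

lemma gen_attach:
  fixes G :: "'a hg" and H :: "'b hg" and u :: 'a and v :: 'b and r :: nat
  assumes fG: "finite (edges G)" and nG: "{} \<notin> edges G"
    and fH: "finite (edges H)" and nH: "{} \<notin> edges H"
  shows "gen (edges (attach r G u m H v)) = gen (edges G) * gen (edges H) ^ m
     + of_nat m * monom 1 1 * gen {e\<in>edges G. u \<notin> e} * gen {e\<in>edges H. v \<notin> e} * gen (edges H) ^ (m - 1)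
     \<and> finite (edges (attach r G u m H v)) \<and> {} \<notin> edges (attach r G u m H v)"
proof -
  define gi where "gi = (\<lambda>x::'a. (Inl (Inl x) :: ('a + nat \<times> 'b) + nat \<times> nat))"
  define hi where "hi = (\<lambda>i (y::'b). (Inl (Inr (i,y)) :: ('a + nat \<times> 'b) + nat \<times> nat))"
  define ne where "ne = (\<lambda>i. {Inl (Inl u), Inl (Inr (i, v))} \<union> Inr ` ({i} \<times> {2..r-1}) :: (('a + nat \<times> 'b) + nat \<times> nat) set)"
  define HA where "HA = (\<lambda>m. {hi i ` e | i e. i < m \<and> e \<in> edges H})"
  define A where "A = (\<lambda>m. (\<lambda>e. gi ` e) ` edges G \<union> HA m \<union> ne ` {..<m})"
  have attA: "edges (attach r G u m H v) = A m"
  proof -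
    have e1: "(\<lambda>e. Inl ` Inl ` e) = (\<lambda>e. gi ` e)" by (simp add: gi_def image_image fun_eq_iff)
    have e2: "{Inl ` Inr ` (\<lambda>y. (i, y)) ` e | i e. i < m \<and> e \<in> edges H} = HA m"
      by (simp add: HA_def hi_def image_image)
    have e3: "{{Inl (Inl u), Inl (Inr (i, v))} \<union> Inr ` ({i} \<times> {2..r-1}) | i. i < m} = ne ` {..<m}"
      by (auto simp: ne_def)
    have "edges (attach r G u m H v) = (\<lambda>e. Inl ` Inl ` e) ` edges G
       \<union> {Inl ` Inr ` (\<lambda>y. (i, y)) ` e | i e. i < m \<and> e \<in> edges H}
       \<union> {{Inl (Inl u), Inl (Inr (i, v))} \<union> Inr ` ({i} \<times> {2..r-1}) | i. i < m}"
      by (simp add: attach_def edges_def)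
    also have "\<dots> = A m" unfolding e1 e2 e3 A_def ..
    finally show ?thesis .
  qed
  have injgi: "inj gi" and injhi: "inj (hi i)" for i by (auto simp: inj_def gi_def hi_def)
  have HAc: "HA m = (\<lambda>e. (\<lambda>p. Inl (Inr p)) ` e) ` edges (hg_copies m H)" for m
    by (auto simp: HA_def hg_copies_def edges_def hi_def image_image)
  have injc: "inj (\<lambda>p. (Inl (Inr p) :: ('a + nat \<times> 'b) + nat \<times> nat))" by (auto simp: inj_def)
  have genHA: "gen (HA m) = gen (edges H) ^ m" and finHA: "finite (HA m)" and neHA: "{} \<notin> HA m" for m
    using gen_copies[OF fH nH, of m] unfolding HAc by (auto simp: gen_image[OF injc])
  have memne: "Inl (Inl u) \<in> ne i" "Inl (Inr (j, v)) \<in> ne i \<longleftrightarrow> j = i" for i j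
    by (auto simp: ne_def)
  have nene: "ne i \<noteq> {}" for i using memne by auto
  have djg: "disjnt (gi ` e) (ne i) \<longleftrightarrow> u \<notin> e" for e i by (auto simp: gi_def ne_def disjnt_def)
  have djh: "disjnt (hi j ` e) (ne i) \<longleftrightarrow> (j \<noteq> i \<or> v \<notin> e)" for e i j by (auto simp: hi_def ne_def disjnt_def)
  have djn: "\<not> disjnt (ne j) (ne i)" for i j using memne(1) by (metis disjnt_iff)
  have HAS: "HA (Suc m) = HA m \<union> (\<lambda>e. hi m ` e) ` edges H" for m
    by (auto simp: HA_def less_Suc_eq)
  have AS: "A (Suc m) = insert (ne m) (A m \<union> (\<lambda>e. hi m ` e) ` edges H)" for m
    by (auto simp: A_def HAS lessThan_Suc)
  let ?X = "monom (1::nat) 1"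
  let ?gG = "gen (edges G)" and ?gH = "gen (edges H)"
  let ?gGu = "gen {e\<in>edges G. u \<notin> e}" and ?gHv = "gen {e\<in>edges H. v \<notin> e}"
  have "finite (A m) \<and> gen (A m) = ?gG * ?gH ^ m + of_nat m * ?X * ?gGu * ?gHv * ?gH ^ (m - 1)"
  proof (induction m)
    case 0
    have "A 0 = (\<lambda>e. gi ` e) ` edges G" by (simp add: A_def HA_def)
    then show ?case using fG by (simp add: gen_image[OF injgi])
  next
    case (Suc m)
    have neA: "ne m \<in> A (Suc m)" by (simp add: A_def)
    have nogi: "Inl (Inr (j, v)) \<notin> gi ` e" for j e by (auto simp: gi_def)
    have nohi: "Inl (Inl u) \<notin> hi i ` e" for i e by (auto simp: hi_def)
    have nohi2: "Inl (Inr (j, y)) \<in> hi i ` e \<Longrightarrow> j = i" for i j y e by (auto simp: hi_def)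
    have notin: "ne m \<notin> A m \<union> (\<lambda>e. hi m ` e) ` edges H"
    proof
      assume "ne m \<in> A m \<union> (\<lambda>e. hi m ` e) ` edges H"
      then consider (a) x where "ne m = gi ` x" | (b) i e where "ne m = hi i ` e" "i < m"
        | (c) i where "ne m = ne i" "i < m" | (d) x where "ne m = hi m ` x"
        unfolding A_def HA_def by auto
      then show False
      proof cases
        case (a x) then show ?thesis using memne(2)[of m m] nogi by metis
      next
        case (b i e) then show ?thesis using memne(1)[of m] nohi by metis
      next
        case (c i) then show ?thesis using memne(2)[of m i] memne(2)[of m m] by (metis less_irrefl)
      next
        case (d x) then show ?thesis using memne(1)[of m] nohi by metis
      qed
    qed
    have del: "A (Suc m) - {ne m} = A m \<union> (\<lambda>e. hi m ` e) ` edges H"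
      using notin unfolding AS by simp
    have filt_un: "{f \<in> X \<union> Y. P f} = {f\<in>X. P f} \<union> {f\<in>Y. P f}" for X Y :: "(('a + nat \<times> 'b) + nat \<times> nat) set set" and P
      by auto
    have F1: "{f \<in> (\<lambda>e. gi ` e) ` edges G. disjnt f (ne m)} = (\<lambda>e. gi ` e) ` {e\<in>edges G. u \<notin> e}"
      by (auto simp: djg)
    have F2: "{f \<in> HA m. disjnt f (ne m)} = HA m" by (auto simp: HA_def djh)
    have F3: "{f \<in> ne ` {..<m}. disjnt f (ne m)} = {}" by (auto simp: djn)
    have F4: "{f \<in> (\<lambda>e. hi m ` e) ` edges H. disjnt f (ne m)} = (\<lambda>e. hi m ` e) ` {e\<in>edges H. v \<notin> e}"
      by (auto simp: djh)
    have D0: "{f \<in> A (Suc m). f \<noteq> ne m \<and> disjnt f (ne m)} = {f \<in> A m \<union> (\<lambda>e. hi m ` e) ` edges H. disjnt f (ne m)}"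
      using notin unfolding AS by auto
    have D: "{f \<in> A (Suc m). f \<noteq> ne m \<and> disjnt f (ne m)}
       = ((\<lambda>e. gi ` e) ` {e\<in>edges G. u \<notin> e} \<union> HA m) \<union> (\<lambda>e. hi m ` e) ` {e\<in>edges H. v \<notin> e}"
      unfolding D0 unfolding A_def filt_un F1 F2 F3 F4 Un_empty_right by (rule refl)
    have finA: "finite (A (Suc m))" using Suc fG fH finHA by (simp add: A_def)
    have nA: "{} \<notin> A m" using nG neHA nene by (auto simp: A_def)
    have g1: "gen (A m \<union> (\<lambda>e. hi m ` e) ` edges H) = gen (A m) * ?gH"
    proof -
      have "gen (A m \<union> (\<lambda>e. hi m ` e) ` edges H) = gen (A m) * gen ((\<lambda>e. hi m ` e) ` edges H)"
        by (rule gen_union) (use Suc fH nA memne in \<open>auto simp: A_def HA_def gi_def hi_def disjnt_def ne_def\<close>)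
      then show ?thesis by (simp add: gen_image[OF injhi])
    qed
    have g2: "gen (((\<lambda>e. gi ` e) ` {e\<in>edges G. u \<notin> e} \<union> HA m) \<union> (\<lambda>e. hi m ` e) ` {e\<in>edges H. v \<notin> e})
       = ?gGu * ?gH ^ m * ?gHv"
    proof -
      have "gen (((\<lambda>e. gi ` e) ` {e\<in>edges G. u \<notin> e} \<union> HA m) \<union> (\<lambda>e. hi m ` e) ` {e\<in>edges H. v \<notin> e})
         = gen ((\<lambda>e. gi ` e) ` {e\<in>edges G. u \<notin> e} \<union> HA m) * gen ((\<lambda>e. hi m ` e) ` {e\<in>edges H. v \<notin> e})"
        by (rule gen_union) (use fG fH nG neHA finHA in \<open>auto simp: HA_def gi_def hi_def disjnt_def\<close>)
      also have "gen ((\<lambda>e. gi ` e) ` {e\<in>edges G. u \<notin> e} \<union> HA m) = gen ((\<lambda>e. gi ` e) ` {e\<in>edges G. u \<notin> e}) * gen (HA m)"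
        by (rule gen_union) (use fG nG finHA in \<open>auto simp: HA_def gi_def hi_def disjnt_def\<close>)
      finally show ?thesis by (simp add: gen_image[OF injhi] gen_image[OF injgi] genHA)
    qed
    have "gen (A (Suc m)) = gen (A m) * ?gH + ?X * (?gGu * ?gH ^ m * ?gHv)"
      using gen_delete[OF finA neA nene] del D g1 g2 by simp
    also have "\<dots> = ?gG * ?gH ^ Suc m + of_nat (Suc m) * ?X * ?gGu * ?gHv * ?gH ^ (Suc m - 1)"
      using Suc by (cases m) (simp_all add: algebra_simps)
    finally show ?case using finA by blast
  qed
  moreover have "{} \<notin> A m" using nG neHA nene by (auto simp: A_def)
  ultimately show ?thesis using attA by simp
qed

lemma card_plus: "finite X \<Longrightarrow> finite Y \<Longrightarrow> card (Inl ` X \<union> Inr ` Y) = card X + card Y"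
  by (subst card_Un_disjoint) (auto simp: card_image)

lemma card_attach:
  assumes "finite (verts G)" "finite (verts H)"
  shows "card (verts (attach r G u m H v)) = card (verts G) + m * card (verts H) + m * card {2..r-1}"
proof -
  have "verts (attach r G u m H v) = Inl ` (Inl ` verts G \<union> Inr ` ({0..<m} \<times> verts H)) \<union> Inr ` ({0..<m} \<times> {2..r-1})"
    by (simp add: attach_def verts_def image_Un)
  then show ?thesis using assms by (simp add: card_plus card_cartesian_product)
qed

lemma card_copies: "card (verts (hg_copies k K)) = k * card (verts K)"
  by (simp add: hg_copies_def verts_def card_cartesian_product)

lemma card_hg_union: "finite (verts K) \<Longrightarrow> finite (verts L) \<Longrightarrow> card (verts (hg_union K L)) = card (verts K) + card (verts L)"
  by (simp add: hg_union_def verts_def card_plus)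

lemma fin_verts_attach: "finite (verts G) \<Longrightarrow> finite (verts H) \<Longrightarrow> finite (verts (attach r G u m H v))"
  by (simp add: attach_def verts_def)

lemma fin_verts_copies: "finite (verts K) \<Longrightarrow> finite (verts (hg_copies k K))"
  by (simp add: hg_copies_def verts_def)

lemma uniform_facts: "uniform_hg r K \<Longrightarrow> r \<ge> 1 \<Longrightarrow> finite (verts K) \<and> finite (edges K) \<and> {} \<notin> edges K"
  unfolding uniform_hg_def
  by (auto intro: finite_subset[of _ "Pow (verts K)"])

lemma match_poly_alt:
  assumes f: "finite (edges K)" and N: "card (edges K) \<le> N"
  shows "match_poly r K = (\<Sum>k\<in>{0..N}. monom ((-1) ^ k * int (coeff (gen (edges K)) k)) (card (verts K) - k * r))"
proof -
  have z: "coeff (gen (edges K)) k = 0" if "k \<in> {0..N} - {0..card (edges K)}" for k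
  proof -
    have "{M. M \<subseteq> edges K \<and> card M = k \<and> pairwise disjnt M} = {}"
      using that card_mono[OF f] by fastforce
    then show ?thesis by (metis coeff_gen[OF f] card.empty)
  qed
  have "match_poly r K = (\<Sum>k\<in>{0..card (edges K)}. monom ((-1) ^ k * int (coeff (gen (edges K)) k)) (card (verts K) - k * r))"
    by (simp add: match_poly_def num_matchings_def coeff_gen[OF f])
  also have "\<dots> = (\<Sum>k\<in>{0..N}. monom ((-1) ^ k * int (coeff (gen (edges K)) k)) (card (verts K) - k * r))"
    by (rule sum.mono_neutral_left) (use N z in auto)
  finally show ?thesis .
qed

theorem lemma9:
  fixes G :: "'a hg" and H :: "'b hg" and u :: 'a and v :: 'b and r m :: nat
  assumes "r \<ge> 2"
    and "uniform_hg r G" and "uniform_hg r H"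
    and "u \<in> verts G" and "v \<in> verts H"
    and "m > 0"
  shows "match_poly r (hg_union (attach r G u m H v) (hg_copies (m - 1) G))
       = match_poly r (hg_union (attach r H v m G u) (hg_copies (m - 1) H))"
proof -
  obtain n where mn: "m = Suc n" using assms(6) by (cases m) auto
  have r1: "r \<ge> 1" using assms(1) by simp
  note UG = uniform_facts[OF assms(2) r1] and UH = uniform_facts[OF assms(3) r1]
  let ?L = "hg_union (attach r G u m H v) (hg_copies (m - 1) G)"
  let ?R = "hg_union (attach r H v m G u) (hg_copies (m - 1) H)"
  note AG = gen_attach[of G H r u m v] and AH = gen_attach[of H G r v m u]
  note CG = gen_copies[of G "m - 1"] and CH = gen_copies[of H "m - 1"]
  have finL: "finite (edges ?L)" and finR: "finite (edges ?R)"
    using AG AH CG CH UG UH by (simp_all add: hg_union_def edges_def)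
  have gL: "gen (edges ?L) = gen (edges (attach r G u m H v)) * gen (edges G) ^ (m - 1)"
    using AG CG UG UH by (simp add: gen_hg_union)
  have gR: "gen (edges ?R) = gen (edges (attach r H v m G u)) * gen (edges H) ^ (m - 1)"
    using AH CH UG UH by (simp add: gen_hg_union)
  have geq: "gen (edges ?L) = gen (edges ?R)"
    unfolding gL gR using AG AH UG UH unfolding mn by (simp add: algebra_simps)
  have veq: "card (verts ?L) = card (verts ?R)"
    using UG UH unfolding mn
    by (simp add: card_hg_union fin_verts_attach fin_verts_copies card_attach card_copies algebra_simps)
  let ?N = "card (edges ?L) + card (edges ?R)"
  show ?thesis
  proof -
    have "card (edges ?L) \<le> ?N" "card (edges ?R) \<le> ?N" by simp_all
    note e1 = match_poly_alt[OF finL this(1), of r] and e2 = match_poly_alt[OF finR this(2), of r]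
    show ?thesis unfolding e1 e2 geq veq ..
  qed
qed

end
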